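(* Let $G=(V,E)$ be a graph with $\mathrm{nd}(G)=\nu$, and let $\alpha_1,\dots,\alpha_\ell$ be local linear cardinality constraints. Then there exist a neighbourhood decomposition $\mathcal{T}$ of $G$ with $|\mathcal{T}|\le\nu 4^\ell$ and local linear cardinality constraints $\alpha'_1,\dots,\alpha'_\ell$ such that: - each $\alpha'_i$ is uniform with respect to $\mathcal{T}$ (every type of $\mathcal{T}$ is uniform with respect to every $\alpha'_i$); - for every tuple $(X_1,\dots,X_\ell)$ of subsets of $V$: $X_i$ satisfies $\alpha_i$ for all $i\in[\ell]$ if and only if $X_i$ satisfies $\alpha'_i$ for all $i\in[\ell]$.
   Context: Neighbourhood decompositions: - Two vertices $u,v$ have the same neighbourhood type if $N(u)\setminus\{v\}=N(v)\setminus\{u\}$. - A neighbourhood decomposition is a partition of $V$ into classes ("types") of pairwise same-type vertices. - $\mathrm{nd}(G)$ is the minimum size of a neighbourhood decomposition. Local linear cardinality constraints: - A local linear cardinality constraint is a map $\alpha$ assigning to each $v\in V$ an integer interval $\alpha(v)=\{l_v,\dots,u_v\}\subseteq\{0,\dots,|V|\}$, possibly empty. - $X\subseteq V$ satisfies $\alpha$ if $|X\cap N(v)|\in\alpha(v)$ for all $v$. - A type $T$ is uniform with respect to $\alpha$ if $\alpha$ is constant on $T$. *)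

theory Defs
  imports Main
begin

definition graph :: "'a set \<Rightarrow> ('a \<Rightarrow> 'a \<Rightarrow> bool) \<Rightarrow> bool" where
  "graph V E \<longleftrightarrow> finite V \<and> (\<forall>u v. E u v \<longrightarrow> u \<in> V \<and> v \<in> V)
     \<and> (\<forall>u v. E u v \<longrightarrow> E v u) \<and> (\<forall>v. \<not> E v v)"

definition nbh :: "'a set \<Rightarrow> ('a \<Rightarrow> 'a \<Rightarrow> bool) \<Rightarrow> 'a \<Rightarrow> 'a set" where
  "nbh V E v = {u \<in> V. E v u}"

definition same_type :: "'a set \<Rightarrow> ('a \<Rightarrow> 'a \<Rightarrow> bool) \<Rightarrow> 'a \<Rightarrow> 'a \<Rightarrow> bool" where
  "same_type V E u v \<longleftrightarrow> nbh V E u - {v} = nbh V E v - {u}"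

definition nbh_decomp :: "'a set \<Rightarrow> ('a \<Rightarrow> 'a \<Rightarrow> bool) \<Rightarrow> 'a set set \<Rightarrow> bool" where
  "nbh_decomp V E \<T> \<longleftrightarrow> \<Union>\<T> = V \<and> {} \<notin> \<T>
     \<and> (\<forall>T1\<in>\<T>. \<forall>T2\<in>\<T>. T1 \<noteq> T2 \<longrightarrow> T1 \<inter> T2 = {})
     \<and> (\<forall>T\<in>\<T>. \<forall>u\<in>T. \<forall>v\<in>T. same_type V E u v)"

definition nd :: "'a set \<Rightarrow> ('a \<Rightarrow> 'a \<Rightarrow> bool) \<Rightarrow> nat" where
  "nd V E = (LEAST k. \<exists>\<T>. nbh_decomp V E \<T> \<and> card \<T> = k)"

definition llcc :: "'a set \<Rightarrow> ('a \<Rightarrow> nat set) \<Rightarrow> bool" where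
  "llcc V \<alpha> \<longleftrightarrow> (\<forall>v\<in>V. \<exists>l u. \<alpha> v = {l..u} \<and> \<alpha> v \<subseteq> {0..card V})"

definition satisfies :: "'a set \<Rightarrow> ('a \<Rightarrow> 'a \<Rightarrow> bool) \<Rightarrow> 'a set \<Rightarrow> ('a \<Rightarrow> nat set) \<Rightarrow> bool" where
  "satisfies V E X \<alpha> \<longleftrightarrow> (\<forall>v\<in>V. card (X \<inter> nbh V E v) \<in> \<alpha> v)"

definition uniform :: "'a set \<Rightarrow> ('a \<Rightarrow> nat set) \<Rightarrow> bool" where
  "uniform T \<alpha> \<longleftrightarrow> (\<forall>u\<in>T. \<forall>v\<in>T. \<alpha> u = \<alpha> v)"

end

theory Submission
  imports Defs
begin

lemma nd_exists:
  assumes "graph V E"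
  shows "\<exists>\<T>. nbh_decomp V E \<T> \<and> card \<T> = nd V E"
proof -
  have "nbh_decomp V E ((\<lambda>v. {v}) ` V)"
    unfolding nbh_decomp_def same_type_def by auto
  then have "\<exists>k. \<exists>\<T>. nbh_decomp V E \<T> \<and> card \<T> = k" by blast
  then show ?thesis unfolding nd_def by (rule LeastI_ex)
qed

lemma same_type_card:
  assumes "graph V E" "same_type V E u v"
  shows "card (X \<inter> nbh V E u) \<le> card (X \<inter> nbh V E v) + 1"
proof -
  have fin: "finite (nbh V E v)" using assms(1) unfolding graph_def nbh_def by auto
  have "X \<inter> nbh V E u \<subseteq> insert v (X \<inter> nbh V E v)"
    using assms(2) unfolding same_type_def by blast
  then have "card (X \<inter> nbh V E u) \<le> card (insert v (X \<inter> nbh V E v))"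
    using fin by (intro card_mono) auto
  also have "\<dots> \<le> card (X \<inter> nbh V E v) + 1"
    using fin by (simp add: card_insert_if)
  finally show ?thesis .
qed

lemma abstract_key:
  fixes c lo hi :: "'a \<Rightarrow> nat"
  assumes "finite S" "v \<in> S" "\<forall>u\<in>S. \<forall>w\<in>S. c u \<le> c w + 1"
    "\<forall>w\<in>S. (lo w = Max (lo ` S) \<longrightarrow> Max (lo ` S) \<le> c w)
          \<and> (hi w = Min (hi ` S) \<longrightarrow> c w \<le> Min (hi ` S))"
  shows "lo v \<le> c v \<and> c v \<le> hi v"
proof
  have ne: "lo ` S \<noteq> {}" "hi ` S \<noteq> {}" using assms(2) by auto
  obtain w where w: "w \<in> S" "lo w = Max (lo ` S)"
    using Max_in[OF _ ne(1)] assms(1) by auto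
  obtain z where z: "z \<in> S" "hi z = Min (hi ` S)"
    using Min_in[OF _ ne(2)] assms(1) by auto
  have lv: "lo v \<le> Max (lo ` S)" using assms(1,2) by auto
  have hv: "Min (hi ` S) \<le> hi v" using assms(1,2) by auto
  have 1: "Max (lo ` S) \<le> c w" using assms(4) w by auto
  have 2: "c z \<le> Min (hi ` S)" using assms(4) z by auto
  have 3: "c w \<le> c v + 1" "c v \<le> c z + 1" using assms(3) w z assms(2) by auto
  show "lo v \<le> c v"
  proof (cases "lo v = Max (lo ` S)")
    case True then show ?thesis using assms(4) assms(2) by auto
  next
    case False then show ?thesis using lv 1 3 by linarith
  qed
  show "c v \<le> hi v"
  proof (cases "hi v = Min (hi ` S)")
    case True then show ?thesis using assms(4) assms(2) by auto
  next
    case False then show ?thesis using hv 2 3 by linarith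
  qed
qed

lemma interval_MinMax:
  fixes a b :: nat
  assumes "A = {a..b}" "A \<noteq> {}"
  shows "A = {Min A..Max A}"
proof -
  have "a \<le> b" using assms by auto
  then have "Min A = a" "Max A = b" using assms(1) by (auto intro!: Min_eqI Max_eqI)
  then show ?thesis using assms(1) by simp
qed

theorem mainTheorem11:
  fixes V :: "'a set" and E :: "'a \<Rightarrow> 'a \<Rightarrow> bool"
    and l :: nat and \<nu> :: nat and \<alpha> :: "nat \<Rightarrow> 'a \<Rightarrow> nat set"
  assumes "graph V E"
    and "nd V E = \<nu>"
    and "\<forall>i<l. llcc V (\<alpha> i)"
  shows "\<exists>\<T> \<alpha>'. nbh_decomp V E \<T> \<and> card \<T> \<le> \<nu> * 4 ^ l
           \<and> (\<forall>i<l. llcc V (\<alpha>' i))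
           \<and> (\<forall>i<l. \<forall>T\<in>\<T>. uniform T (\<alpha>' i))
           \<and> (\<forall>X :: nat \<Rightarrow> 'a set. (\<forall>i<l. X i \<subseteq> V) \<longrightarrow>
                ((\<forall>i<l. satisfies V E (X i) (\<alpha> i)) \<longleftrightarrow>
                 (\<forall>i<l. satisfies V E (X i) (\<alpha>' i))))"
proof -
  obtain \<T>0 where T0: "nbh_decomp V E \<T>0" "card \<T>0 = \<nu>"
    using nd_exists[OF assms(1)] assms(2) by auto
  have finV: "finite V" using assms(1) unfolding graph_def by auto
  have nbhV: "\<And>v. nbh V E v \<subseteq> V" unfolding nbh_def by auto
  have cardle: "\<And>Y v. card (Y \<inter> nbh V E v) \<le> card V"
    using nbhV by (intro card_mono[OF finV]) blast
  show ?thesis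
  proof (cases "\<exists>i<l. \<exists>v\<in>V. \<alpha> i v = {}")
    case True
    then obtain i0 v0 where i0: "i0 < l" "v0 \<in> V" "\<alpha> i0 v0 = {}" by auto
    have "llcc V (\<lambda>_. {})" unfolding llcc_def by (intro ballI exI[of _ 1] exI[of _ 0]) auto
    moreover have "\<forall>X :: nat \<Rightarrow> 'a set. (\<forall>i<l. X i \<subseteq> V) \<longrightarrow>
                ((\<forall>i<l. satisfies V E (X i) (\<alpha> i)) \<longleftrightarrow>
                 (\<forall>i<l. satisfies V E (X i) ((\<lambda>_ _. {}) i)))"
    proof (intro allI impI)
      fix X :: "nat \<Rightarrow> 'a set"
      have "\<not> satisfies V E (X i0) (\<alpha> i0)" using i0 unfolding satisfies_def by blast
      moreover have "\<not> satisfies V E (X i0) ((\<lambda>_ _. {}) i0)" using i0 unfolding satisfies_def by blast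
      ultimately show "(\<forall>i<l. satisfies V E (X i) (\<alpha> i)) \<longleftrightarrow>
                 (\<forall>i<l. satisfies V E (X i) ((\<lambda>_ _. {}) i))" using i0(1) by blast
    qed
    moreover have "card \<T>0 \<le> \<nu> * 4 ^ l" using T0 by simp
    ultimately show ?thesis using T0(1) unfolding uniform_def
      by (intro exI[of _ \<T>0] exI[of _ "\<lambda>_ _. {}"]) auto
  next
    case False
    define lo where "lo i v = Min (\<alpha> i v)" for i v
    define hi where "hi i v = Max (\<alpha> i v)" for i v
    have alpha_eq: "\<alpha> i v = {lo i v..hi i v}" if iv: "i < l" "v \<in> V" for i v
    proof -
      have "llcc V (\<alpha> i)" using assms(3) iv by blast
      then obtain a b where ab: "\<alpha> i v = {a..b}" using iv(2) unfolding llcc_def by blast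
      have "\<alpha> i v \<noteq> {}" using False iv by blast
      then show ?thesis unfolding lo_def hi_def using interval_MinMax[OF ab] by simp
    qed
    have hi_le: "hi i v \<le> card V" if "i < l" "v \<in> V" for i v
    proof -
      have "lo i v \<le> hi i v" using alpha_eq[OF that] False that by (metis atLeastatMost_empty_iff)
      then have "hi i v \<in> \<alpha> i v" using alpha_eq[OF that] by auto
      moreover have "\<alpha> i v \<subseteq> {0..card V}" using assms(3) that unfolding llcc_def by blast
      ultimately show ?thesis by auto
    qed
    have lo_le: "lo i v \<le> hi i v" if "i < l" "v \<in> V" for i v
      using alpha_eq[OF that] False that by (metis atLeastatMost_empty_iff)
    define \<tau> where "\<tau> u = (SOME T. T \<in> \<T>0 \<and> u \<in> T)" for u
    have tau: "\<tau> u \<in> \<T>0 \<and> u \<in> \<tau> u" if "u \<in> V" for u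
    proof -
      have "\<exists>T. T \<in> \<T>0 \<and> u \<in> T" using T0(1) that unfolding nbh_decomp_def by auto
      then show ?thesis unfolding \<tau>_def by (rule someI_ex)
    qed
    define cls where "cls u = {v\<in>V. \<tau> v = \<tau> u}" for u
    define L where "L i u = Max (lo i ` cls u)" for i u
    define H where "H i u = Min (hi i ` cls u)" for i u
    define a where "a i u = (lo i u = L i u)" for i u
    define b where "b i u = (hi i u = H i u)" for i u
    define sig where "sig u = (\<tau> u, map (\<lambda>i. (a i u, b i u)) [0..<l])" for u
    define cl where "cl u = {v\<in>V. sig v = sig u}" for u
    define \<T> where "\<T> = cl ` V"
    define \<alpha>' where "\<alpha>' i u = {(if a i u then L i u else 0)..(if b i u then H i u else card V)}" for i u
    have sig_eq: "\<tau> v = \<tau> w \<and> a i v = a i w \<and> b i v = b i w" if "sig v = sig w" "i < l" for v w i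
    proof -
      show ?thesis using that unfolding sig_def by auto
    qed
    have cls_eq: "cls v = cls w" if "\<tau> v = \<tau> w" for v w
      using that unfolding cls_def by simp
    have LH_eq: "L i v = L i w" "H i v = H i w" if "\<tau> v = \<tau> w" for i v w
      using cls_eq[OF that] unfolding L_def H_def by auto
    have decomp: "nbh_decomp V E \<T>"
      unfolding nbh_decomp_def
    proof (intro conjI ballI impI)
      show "\<Union> \<T> = V" unfolding \<T>_def cl_def by auto
      show "{} \<notin> \<T>" unfolding \<T>_def cl_def by auto
      show "T1 \<inter> T2 = {}" if "T1 \<in> \<T>" "T2 \<in> \<T>" "T1 \<noteq> T2" for T1 T2
        using that unfolding \<T>_def cl_def by auto
      show "same_type V E u v" if tuv: "T \<in> \<T>" "u \<in> T" "v \<in> T" for T u v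
      proof -
        obtain w where w: "w \<in> V" "T = cl w" using tuv(1) unfolding \<T>_def by auto
        have "\<tau> u = \<tau> w" "\<tau> v = \<tau> w" "u \<in> V" "v \<in> V"
          using tuv w unfolding cl_def sig_def by auto
        then have "\<tau> w \<in> \<T>0" "u \<in> \<tau> w" "v \<in> \<tau> w" using tau by force+
        then show ?thesis using T0(1) unfolding nbh_decomp_def by blast
      qed
    qed
    have card: "card \<T> \<le> \<nu> * 4 ^ l"
    proof -
      have card4: "card (UNIV :: (bool \<times> bool) set) = 4"
        by (simp add: UNIV_Times_UNIV[symmetric] card_cartesian_product card_UNIV_bool del: UNIV_Times_UNIV)
      have "\<T> = (\<lambda>s. {v\<in>V. sig v = s}) ` (sig ` V)" unfolding \<T>_def cl_def by auto
      then have "card \<T> \<le> card (sig ` V)" by (simp add: card_image_le finV)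
      also have "\<dots> \<le> card (\<T>0 \<times> {xs. set xs \<subseteq> (UNIV :: (bool \<times> bool) set) \<and> length xs = l})"
      proof (rule card_mono)
        have "finite \<T>0" using T0(1) finV unfolding nbh_decomp_def
          by (metis Sup_upper finite_UnionD)
        then show "finite (\<T>0 \<times> {xs. set xs \<subseteq> (UNIV :: (bool \<times> bool) set) \<and> length xs = l})"
          using finite_lists_length_eq[of "UNIV :: (bool \<times> bool) set" l] by auto
        show "sig ` V \<subseteq> \<T>0 \<times> {xs. set xs \<subseteq> UNIV \<and> length xs = l}"
          unfolding sig_def using tau by auto
      qed
      also have "\<dots> = \<nu> * 4 ^ l"
        using card_lists_length_eq[of "UNIV :: (bool \<times> bool) set" l] card4
        by (simp add: card_cartesian_product T0(2) card_UNIV_bool)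
      finally show ?thesis .
    qed
    have llcc': "llcc V (\<alpha>' i)" if "i < l" for i
    proof -
      have "L i u \<le> card V" if "u \<in> V" for u
      proof -
        have "finite (cls u)" "u \<in> cls u" using finV that unfolding cls_def by auto
        then have "L i u \<in> lo i ` cls u" unfolding L_def by (intro Max_in) auto
        then show ?thesis using lo_le hi_le \<open>i < l\<close> unfolding cls_def by force
      qed
      moreover have "H i u \<le> card V" if "u \<in> V" for u
      proof -
        have "finite (cls u)" "u \<in> cls u" using finV that unfolding cls_def by auto
        then have "H i u \<le> hi i u" unfolding H_def by (intro Min_le) auto
        then show ?thesis using hi_le[OF \<open>i < l\<close> that] by linarith
      qed
      ultimately show ?thesis unfolding llcc_def \<alpha>'_def by auto
    qed
    have unif: "uniform T (\<alpha>' i)" if iT: "i < l" "T \<in> \<T>" for i T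
    proof -
      obtain w where w: "T = cl w" using iT(2) unfolding \<T>_def by auto
      show ?thesis unfolding uniform_def
      proof (intro ballI)
        fix u v assume "u \<in> T" "v \<in> T"
        then have "sig u = sig v" using w unfolding cl_def by auto
        then have "\<tau> u = \<tau> v \<and> a i u = a i v \<and> b i u = b i v" using sig_eq iT(1) by blast
        then have "L i u = L i v" "H i u = H i v" "a i u = a i v" "b i u = b i v" using LH_eq[of u v i] by auto
        then show "\<alpha>' i u = \<alpha>' i v" unfolding \<alpha>'_def by simp
      qed
    qed
    have equiv: "satisfies V E Y (\<alpha> i) \<longleftrightarrow> satisfies V E Y (\<alpha>' i)" if "i < l" for i Y
    proof -
      define c where "c v = card (Y \<inter> nbh V E v)" for v
      have "satisfies V E Y (\<alpha> i) \<longleftrightarrow> (\<forall>v\<in>V. lo i v \<le> c v \<and> c v \<le> hi i v)"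
        unfolding satisfies_def c_def using alpha_eq[OF that] by auto
      moreover have "satisfies V E Y (\<alpha>' i) \<longleftrightarrow>
          (\<forall>v\<in>V. (a i v \<longrightarrow> L i v \<le> c v) \<and> (b i v \<longrightarrow> c v \<le> H i v))"
        unfolding satisfies_def c_def \<alpha>'_def using cardle by auto
      moreover have "(\<forall>v\<in>V. lo i v \<le> c v \<and> c v \<le> hi i v) \<longleftrightarrow>
          (\<forall>v\<in>V. (a i v \<longrightarrow> L i v \<le> c v) \<and> (b i v \<longrightarrow> c v \<le> H i v))"
      proof
        assume "\<forall>v\<in>V. lo i v \<le> c v \<and> c v \<le> hi i v"
        then show "\<forall>v\<in>V. (a i v \<longrightarrow> L i v \<le> c v) \<and> (b i v \<longrightarrow> c v \<le> H i v)"
          unfolding a_def b_def by auto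
      next
        assume R: "\<forall>v\<in>V. (a i v \<longrightarrow> L i v \<le> c v) \<and> (b i v \<longrightarrow> c v \<le> H i v)"
        show "\<forall>v\<in>V. lo i v \<le> c v \<and> c v \<le> hi i v"
        proof
          fix v assume v: "v \<in> V"
          show "lo i v \<le> c v \<and> c v \<le> hi i v"
          proof (rule abstract_key[where S = "cls v"])
            show "finite (cls v)" using finV unfolding cls_def by auto
            show "v \<in> cls v" using v unfolding cls_def by auto
            show "\<forall>u\<in>cls v. \<forall>w\<in>cls v. c u \<le> c w + 1"
            proof (intro ballI)
              fix u w assume "u \<in> cls v" "w \<in> cls v"
              then have "u \<in> V" "w \<in> V" "\<tau> u = \<tau> v" "\<tau> w = \<tau> v" unfolding cls_def by auto
              then have "\<tau> v \<in> \<T>0" "u \<in> \<tau> v" "w \<in> \<tau> v" using tau by force+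
              then have "same_type V E u w" using T0(1) unfolding nbh_decomp_def by blast
              then show "c u \<le> c w + 1" unfolding c_def using same_type_card[OF assms(1)] by blast
            qed
            show "\<forall>w\<in>cls v. (lo i w = Max (lo i ` cls v) \<longrightarrow> Max (lo i ` cls v) \<le> c w)
                \<and> (hi i w = Min (hi i ` cls v) \<longrightarrow> c w \<le> Min (hi i ` cls v))"
            proof (intro ballI)
              fix w assume "w \<in> cls v"
              then have "w \<in> V" "cls w = cls v" unfolding cls_def by auto
              moreover have "(a i w \<longrightarrow> L i w \<le> c w) \<and> (b i w \<longrightarrow> c w \<le> H i w)"
                using R \<open>w \<in> V\<close> by blast
              ultimately show "(lo i w = Max (lo i ` cls v) \<longrightarrow> Max (lo i ` cls v) \<le> c w)
                \<and> (hi i w = Min (hi i ` cls v) \<longrightarrow> c w \<le> Min (hi i ` cls v))"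
                unfolding a_def b_def L_def H_def by simp
            qed
          qed
        qed
      qed
      ultimately show ?thesis by simp
    qed
    show ?thesis
      using decomp card llcc' unif equiv
      by (intro exI[of _ \<T>] exI[of _ \<alpha>']) auto
  qed
qed

end
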